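(* Let $p\ge2$ and $n=p-1$. Let $L$ be a linear subspace of $\mathrm{Sym}(p)$ with $L\cap\mathrm{Sym}_+(p)\neq\emptyset$ and $\dim L\le T_p-T_1=T_p-1$. Then $L$ is $n$-estimable.
   Context: $\mathrm{Sym}(p)$ denotes real symmetric $p\times p$ matrices, $\mathrm{Sym}_+(p)$ its positive definite elements, $T_k=k(k+1)/2$. $L$ is $n$-estimable if there exist $x^1,\dots,x^n\in\mathbb R^p$ such that $K=0$ is the only $K\in L$ with $Kx^i=0$ for all $i=1,\dots,n$. *)

theory Defs
  imports "HOL-Analysis.Analysis"
begin

definition sym_mats :: "(real^'n^'n) set" where
  "sym_mats = {A. transpose A = A}"

definition pd_mats :: "(real^'n^'n) set" where
  "pd_mats = {A. transpose A = A \<and> (\<forall>x::real^'n. x \<noteq> 0 \<longrightarrow> x \<bullet> (A *v x) > 0)}"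

definition T :: "nat \<Rightarrow> nat" where
  "T k = k * (k + 1) div 2"

definition n_estimable :: "nat \<Rightarrow> (real^'n^'n) set \<Rightarrow> bool" where
  "n_estimable n L \<longleftrightarrow> (\<exists>x :: nat \<Rightarrow> real^'n.
      \<forall>K\<in>L. (\<forall>i<n. K *v x i = 0) \<longrightarrow> K = 0)"

end

theory Submission imports Defs begin

definition outer :: "real^'n \<Rightarrow> real^'n^'n" where
  "outer w = (\<chi> i j. w$i * w$j)"

lemma outer_mult: "outer w *v x = (w \<bullet> x) *\<^sub>R w"
  by (simp add: outer_def matrix_vector_mult_def vec_eq_iff inner_vec_def sum_distrib_left mult_ac)

lemma key_kernel:
  fixes K :: "real^'n^'n" and w :: "real^'n"
  assumes sym: "transpose K = K" and w: "w \<noteq> 0"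
    and V: "\<And>v. w \<bullet> v = 0 \<Longrightarrow> K *v v = 0"
  shows "\<exists>c. K = c *\<^sub>R outer w"
proof -
  have ww: "w \<bullet> w \<noteq> 0" using w by simp
  define a where "a = (w \<bullet> (K *v w)) / (w \<bullet> w)"
  define u where "u = K *v w - a *\<^sub>R w"
  have uw: "w \<bullet> u = 0" using ww unfolding u_def a_def by (simp add: inner_diff_right)
  have Ku: "K *v u = 0" using V uw by blast
  have "u \<bullet> (K *v w) = (u v* K) \<bullet> w" by (simp add: dot_lmul_matrix)
  also have "u v* K = K *v u" by (metis sym vector_transpose_matrix)
  finally have "u \<bullet> (K *v w) = 0" using Ku by simp
  hence "u \<bullet> u = 0" using uw unfolding u_def by (simp add: inner_diff_right inner_commute)
  hence Kw: "K *v w = a *\<^sub>R w" unfolding u_def by simp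
  have "K *v x = (a / (w \<bullet> w)) *\<^sub>R outer w *v x" for x
  proof -
    define v where "v = x - ((w \<bullet> x) / (w \<bullet> w)) *\<^sub>R w"
    have "w \<bullet> v = 0" using ww unfolding v_def by (simp add: inner_diff_right)
    hence "K *v v = 0" using V by blast
    hence "K *v x = ((w \<bullet> x) / (w \<bullet> w)) *\<^sub>R (K *v w)"
      unfolding v_def by (simp add: matrix_vector_mult_diff_distrib matrix_scaleR_vector_ac scaleR_matrix_vector_assoc)
    also have "\<dots> = (a / (w \<bullet> w)) *\<^sub>R (outer w *v x)"
      by (simp add: Kw outer_mult)
    finally show ?thesis by (simp add: scaleR_matrix_vector_assoc)
  qed
  thus ?thesis by (metis matrix_eq)
qed


lemma estimable_of_outer:
  fixes L :: "(real^'n^'n) set" and w :: "real^'n"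
  assumes L: "subspace L" "L \<subseteq> sym_mats" and w: "w \<noteq> 0" and nL: "outer w \<notin> L"
  shows "n_estimable (CARD('n) - 1) L"
proof -
  define V where "V = {x::real^'n. w \<bullet> x = 0}"
  have dV: "dim V = CARD('n) - 1" unfolding V_def using dim_hyperplane[OF w] by simp
  obtain B where B: "B \<subseteq> V" "independent B" "V \<subseteq> span B" "card B = dim V"
    using basis_exists by blast
  have fB: "finite B" using B(2) finiteI_independent by blast
  obtain h where h: "bij_betw h {0..<card B} B" using ex_bij_betw_nat_finite[OF fB] by blast
  show ?thesis unfolding n_estimable_def
  proof (intro exI ballI impI)
    fix K assume K: "K \<in> L" and Kx: "\<forall>i<CARD('n) - 1. K *v h i = 0"
    have "\<forall>b\<in>B. K *v b = 0"
    proof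
      fix b assume "b \<in> B"
      then obtain i where "i < card B" "b = h i" using h unfolding bij_betw_def by (metis atLeastLessThan_iff imageE)
      thus "K *v b = 0" using Kx B(4) dV by auto
    qed
    hence "B \<subseteq> {x. K *v x = 0}" by auto
    hence "span B \<subseteq> {x. K *v x = 0}"
      by (intro span_minimal linear_subspace_kernel) auto
    hence KV: "\<And>v. w \<bullet> v = 0 \<Longrightarrow> K *v v = 0" using B(3) unfolding V_def by auto
    have sym: "transpose K = K" using K L(2) unfolding sym_mats_def by auto
    obtain c where c: "K = c *\<^sub>R outer w" using key_kernel[OF sym w KV] by blast
    show "K = 0"
    proof (rule ccontr)
      assume "K \<noteq> 0"
      hence "c \<noteq> 0" using c by auto
      hence "outer w = (1/c) *\<^sub>R K" using c by simp
      hence "outer w \<in> L" using K L(1) by (simp add: subspace_scale)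
      thus False using nL by blast
    qed
  qed
qed


definition ind :: "'n set \<Rightarrow> real^'n" where
  "ind B = (\<chi> i. if i \<in> B then 1 else 0)"

lemma outer_ind: "outer (ind B) $ i $ j = (if i \<in> B \<and> j \<in> B then 1 else 0)"
  by (simp add: outer_def ind_def)

lemma card_Bs:
  "card ({B::'n::finite set. card B = 1} \<union> {B. card B = 2}) = T CARD('n)"
proof -
  have "card ({B::'n set. card B = 1} \<union> {B. card B = 2}) = card {B::'n set. card B = 1} + card {B::'n set. card B = 2}"
    by (rule card_Un_disjoint) auto
  also have "\<dots> = (CARD('n) choose 1) + (CARD('n) choose 2)"
    using n_subsets[of "UNIV::'n set"] by simp
  also have "\<dots> = T CARD('n)"
  proof -
    have "CARD('n) * (CARD('n)+1) = 2*CARD('n) + CARD('n)*(CARD('n)-1)"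
      by (cases "CARD('n)") (auto simp: algebra_simps)
    thus ?thesis unfolding T_def choose_two by simp
  qed
  finally show ?thesis .
qed

lemma indep_Bs:
  "independent ((\<lambda>B. outer (ind B)) ` ({B::'n::finite set. card B = 1} \<union> {B. card B = 2}))"
  (is "independent (?M ` ?Bs)")
proof -
  have inj: "inj ?M"
  proof
    fix A B :: "'n set" assume "?M A = ?M B"
    hence h: "\<And>i. ?M A $ i $ i = ?M B $ i $ i" by simp
    show "A = B"
    proof (rule set_eqI)
      fix x show "x \<in> A \<longleftrightarrow> x \<in> B" using h[of x] unfolding outer_ind by (auto split: if_splits)
    qed
  qed
  show ?thesis unfolding independent_explicit
  proof (intro conjI allI impI ballI)
    show "finite (?M ` ?Bs)" by simp
    fix c assume s: "(\<Sum>v\<in>?M ` ?Bs. c v *\<^sub>R v) = 0"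
    define d where "d B = c (?M B)" for B
    have s2: "(\<Sum>B\<in>?Bs. d B *\<^sub>R ?M B) = 0"
      using s by (simp add: sum.reindex inj_on_subset[OF inj] d_def)
    have ent: "(\<Sum>B\<in>{B\<in>?Bs. i \<in> B \<and> j \<in> B}. d B) = 0" for i j
    proof -
      have "(\<Sum>B\<in>?Bs. d B *\<^sub>R ?M B) $ i $ j = 0" using s2 by simp
      hence "(\<Sum>B\<in>?Bs. d B * (if i \<in> B \<and> j \<in> B then 1 else 0)) = 0"
        by (simp add: sum_component outer_ind)
      thus ?thesis by (simp add: sum.inter_filter[symmetric] if_distrib cong: if_cong)
    qed
    have d2: "d B = 0" if c2: "card B = 2" for B
    proof -
      obtain i j where ij: "B = {i, j}" "i \<noteq> j" using card_2_iff[THEN iffD1, OF c2] by blast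
      have "C \<in> ?Bs \<and> i \<in> C \<and> j \<in> C \<longleftrightarrow> C = {i,j}" for C
      proof
        assume C: "C \<in> ?Bs \<and> i \<in> C \<and> j \<in> C"
        have "card C \<noteq> 1"
        proof
          assume "card C = 1"
          then obtain x where "C = {x}" using card_1_singleton_iff[of C] \<open>card C = 1\<close> by auto
          thus False using C ij(2) by auto
        qed
        hence "card C = 2" using C by auto
        moreover have "{i,j} \<subseteq> C" using C by auto
        moreover have "card {i,j} = 2" using ij(2) by simp
        ultimately show "C = {i,j}" using card_subset_eq[of C "{i,j}"] by simp
      next
        assume "C = {i,j}"
        thus "C \<in> ?Bs \<and> i \<in> C \<and> j \<in> C" using ij(2) by simp
      qed
      hence "{B\<in>?Bs. i \<in> B \<and> j \<in> B} = {{i,j}}" by blast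
      thus ?thesis using ent[of i j] ij by simp
    qed
    have d1: "d B = 0" if c1: "card B = 1" for B
    proof -
      obtain i where i: "B = {i}" using card_1_singleton_iff[of B] c1 by auto
      have fin: "finite {C\<in>?Bs. i \<in> C \<and> i \<in> C}" by simp
      have "(\<Sum>C\<in>{C\<in>?Bs. i \<in> C \<and> i \<in> C}. d C) = (\<Sum>C\<in>{{i}}. d C)"
      proof (rule sum.mono_neutral_right)
        show "finite {C\<in>?Bs. i \<in> C \<and> i \<in> C}" by simp
        show "{{i}} \<subseteq> {C\<in>?Bs. i \<in> C \<and> i \<in> C}" by simp
        show "\<forall>C\<in>{C\<in>?Bs. i \<in> C \<and> i \<in> C} - {{i}}. d C = 0"
        proof
          fix C assume "C \<in> {C\<in>?Bs. i \<in> C \<and> i \<in> C} - {{i}}"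
          hence C: "C \<in> ?Bs" "i \<in> C" "C \<noteq> {i}" by auto
          have "card C \<noteq> 1"
          proof
            assume "card C = 1"
            then obtain x where "C = {x}" using card_1_singleton_iff[of C] \<open>card C = 1\<close> by auto
            thus False using C by auto
          qed
          thus "d C = 0" using d2 C(1) by auto
        qed
      qed
      hence "(\<Sum>C\<in>{C\<in>?Bs. i \<in> C \<and> i \<in> C}. d C) = d {i}" by simp
      thus ?thesis using ent[of i i] i by simp
    qed
    fix v assume "v \<in> ?M ` ?Bs"
    then obtain B where "B \<in> ?Bs" "v = ?M B" by blast
    thus "c v = 0" using d1 d2 d_def by auto
  qed
qed


theorem proposition5:
  fixes L :: "(real^'n^'n) set"
  assumes "CARD('n) \<ge> 2"
    and "subspace L"
    and "L \<subseteq> sym_mats"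
    and "L \<inter> pd_mats \<noteq> {}"
    and "dim L \<le> T (CARD('n)) - T 1"
  shows "n_estimable (CARD('n) - 1) L"
proof (rule ccontr)
  assume ne: "\<not> n_estimable (CARD('n) - 1) L"
  have all: "outer w \<in> L" if "w \<noteq> 0" for w :: "real^'n"
    using estimable_of_outer[OF assms(2,3) that] ne by blast
  define Bs where "Bs = {B::'n set. card B = 1} \<union> {B. card B = 2}"
  have "ind B \<noteq> 0" if "B \<in> Bs" for B
  proof -
    from that have "B \<noteq> {}" unfolding Bs_def by auto
    then obtain i where "i \<in> B" by blast
    hence "ind B $ i \<noteq> 0 $ i" by (simp add: ind_def)
    thus ?thesis by metis
  qed
  hence sub: "(\<lambda>B. outer (ind B)) ` Bs \<subseteq> L" using all by blast
  have inj: "inj (\<lambda>B::'n set. outer (ind B))"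
  proof
    fix A B :: "'n set" assume "outer (ind A) = outer (ind B)"
    hence h: "\<And>i. outer (ind A) $ i $ i = outer (ind B) $ i $ i" by simp
    show "A = B"
    proof (rule set_eqI)
      fix x show "x \<in> A \<longleftrightarrow> x \<in> B" using h[of x] unfolding outer_ind by (auto split: if_splits)
    qed
  qed
  have "card ((\<lambda>B. outer (ind B)) ` Bs) \<le> dim L"
    using independent_card_le_dim[OF sub] indep_Bs unfolding Bs_def by blast
  moreover have "card ((\<lambda>B. outer (ind B)) ` Bs) = T CARD('n)"
    using card_image[OF inj_on_subset[OF inj]] card_Bs unfolding Bs_def by auto
  moreover have "T CARD('n) \<ge> 1" using assms(1) unfolding T_def by simp
  moreover have "T 1 = 1" by (simp add: T_def)
  ultimately show False using assms(5) by linarith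
qed

end
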